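(* Let $H\in(\tfrac12,1)$ and $n>1$ an integer, and let $i_n=\lfloor x_n\rfloor+1$. The function $I_n:\{1,\dots,n-1\}\to(0,\infty)$, $I_n(i)=\int_{i-1}^i x^{\frac12-H}\phi_n^H(x)\,dx$, is decreasing on $\{1,\dots,i_n-1\}$ and increasing on $\{i_n+1,\dots,n-1\}$.
   Context: $\phi_n^H(x)=(n-x)^{H-\frac12}-(n-1-x)^{H-\frac12}$. Here $x_n\in(0,n-1)$ is the unique point such that $x\mapsto x^{\frac12-H}\phi_n^H(x)$ is strictly decreasing on $(0,x_n)$ and strictly increasing on $(x_n,n-1)$; explicitly $x_n=n-1-\Big(\big(1+\frac1{n-1}\big)^{\frac2{3-2H}}-1\Big)^{-1}$. *)

theory Defs
  imports "HOL-Analysis.Analysis"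
begin

definition phiH :: "real \<Rightarrow> nat \<Rightarrow> real \<Rightarrow> real" where
  "phiH H n x = (real n - x) powr (H - 1/2) - (real n - 1 - x) powr (H - 1/2)"

definition xn :: "real \<Rightarrow> nat \<Rightarrow> real" where
  "xn H n = real n - 1 - 1 / ((1 + 1 / (real n - 1)) powr (2 / (3 - 2*H)) - 1)"

definition In :: "real \<Rightarrow> nat \<Rightarrow> nat \<Rightarrow> real" where
  "In H n i = integral {real i - 1 .. real i} (\<lambda>x. x powr (1/2 - H) * phiH H n x)"

definition i_n :: "real \<Rightarrow> nat \<Rightarrow> int" where
  "i_n H n = \<lfloor>xn H n\<rfloor> + 1"

end

theory Submission
  imports Defs
begin

lemma powr_m1: "(y::real) > 0 \<Longrightarrow> y powr r = y * y powr (r - 1)"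
  by (simp add: powr_diff)

lemma F_deriv:
  fixes H x :: real and n :: nat
  assumes "0<x" "x < real n - 1"
  shows "((\<lambda>x. x powr (1/2-H) * phiH H n x) has_real_derivative
     (H-1/2) * x powr (1/2-H-1) * ((real n-1)*(real n-1-x) powr (H-1/2-1) - real n*(real n-x) powr (H-1/2-1))) (at x)"
proof -
  define a where "a = H - 1/2"
  have e: "1/2 - H = -a" by (simp add: a_def)
  have d1: "((\<lambda>x. x powr (-a)) has_real_derivative (-a) * x powr (-a-1)) (at x)"
    using assms(1) by (rule has_real_derivative_powr)
  have dg: "\<And>c. ((\<lambda>x. c - x) has_real_derivative (-1)) (at x)"
    by (auto intro!: derivative_eq_intros)
  have d2: "\<And>c. c - x > 0 \<Longrightarrow> ((\<lambda>x. (c - x) powr a) has_real_derivative (a * (c-x) powr (a-1)) * (-1)) (at x)"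
    by (rule DERIV_chain2[OF has_real_derivative_powr dg]) 
  have d3: "((\<lambda>x. x powr (-a) * ((real n - x) powr a - (real n - 1 - x) powr a)) has_real_derivative
      (-a) * x powr (-a-1) * ((real n - x) powr a - (real n - 1 - x) powr a)
      + x powr (-a) * ((a * (real n-x) powr (a-1)) * (-1) - (a * (real n - 1-x) powr (a-1)) * (-1))) (at x)"
  proof -
    have "real n - x > 0" "real n - 1 - x > 0" using assms by auto
    from DERIV_mult[OF d1 DERIV_diff[OF d2[OF this(1)] d2[OF this(2)]]] show ?thesis
      by (rule DERIV_cong) (simp add: algebra_simps)
  qed
  have eq: "(-a) * x powr (-a-1) * ((real n - x) powr a - (real n - 1 - x) powr a)
      + x powr (-a) * ((a * (real n-x) powr (a-1)) * (-1) - (a * (real n - 1-x) powr (a-1)) * (-1))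
      = a * x powr (-a-1) * ((real n-1)*(real n-1-x) powr (a-1) - real n*(real n-x) powr (a-1))"
  proof -
    have p1: "x powr (-a) = x * x powr (-a-1)" using assms(1) by (rule powr_m1)
    have p2: "(real n - x) powr a = (real n - x) * (real n - x) powr (a-1)" using assms by (intro powr_m1) auto
    have p3: "(real n - 1 - x) powr a = (real n - 1 - x) * (real n - 1 - x) powr (a-1)" using assms by (intro powr_m1) auto
    show ?thesis unfolding p1 p2 p3 by (simp add: algebra_simps)
  qed
  note d4 = DERIV_cong[OF d3 eq]
  show ?thesis unfolding phiH_def e using d4 by (simp add: a_def)
qed
lemma Q_sign:
  fixes H x :: real and n :: nat
  assumes H: "1/2<H" "H<1" and n: "1<n" and x: "0 \<le> x" "x < real n - 1"
  shows "x < xn H n \<Longrightarrow> (real n-1)*(real n-1-x) powr (H-1/2-1) - real n*(real n-x) powr (H-1/2-1) < 0"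
    and "xn H n < x \<Longrightarrow> (real n-1)*(real n-1-x) powr (H-1/2-1) - real n*(real n-x) powr (H-1/2-1) > 0"
proof -
  define m where "m = real n - 1"
  define b where "b = 3/2 - H"
  define p where "p = 2/(3-2*H)"
  define c where "c = (1 + 1/m) powr p"
  define u where "u = (real n - x)/(m - x)"
  have m1: "m \<ge> 1" using n by (simp add: m_def)
  have mx: "m - x > 0" "real n - x > 0" using x by (auto simp: m_def)
  have bp: "b > 0" "p > 0" "p * b = 1" using H by (auto simp: b_def p_def field_simps)
  have base: "1 + 1/m = real n / m" using m1 by (simp add: m_def field_simps)
  have nm: "real n / m > 1" using m1 by (simp add: m_def)
  have cb: "c powr b = real n / m" unfolding c_def base powr_powr bp(3) using nm m1 by simp
  have c1: "c > 1"
  proof -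
    have "1 powr p < (real n / m) powr p" using nm bp by (intro powr_less_mono2) auto
    thus ?thesis by (simp add: c_def base)
  qed
  have xn_eq: "xn H n = m - 1/(c-1)" by (simp add: xn_def m_def c_def p_def)
  have u_eq: "u = 1 + 1/(m-x)" using mx by (simp add: u_def m_def field_simps)
  have upow: "u powr b = (real n - x) powr b / (m - x) powr b" by (simp add: u_def powr_divide)
  have Qeq: "(real n-1)*(real n-1-x) powr (H-1/2-1) - real n*(real n-x) powr (H-1/2-1)
      = m / (m-x) powr b - real n / (real n - x) powr b"
  proof -
    have e: "H-1/2-1 = -b" by (simp add: b_def)
    show ?thesis unfolding e powr_minus_divide m_def by simp
  qed
  have A: "(real n - x) powr b > 0" "(m - x) powr b > 0" using mx by auto
  show "x < xn H n \<Longrightarrow> (real n-1)*(real n-1-x) powr (H-1/2-1) - real n*(real n-x) powr (H-1/2-1) < 0"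
  proof -
    assume "x < xn H n"
    hence "1/(c-1) < m - x" unfolding xn_eq by simp
    hence "1 < (m-x)*(c-1)" using c1 by (simp add: field_simps)
    hence "1/(m-x) < c - 1" using mx by (simp add: field_simps)
    hence "u < c" unfolding u_eq by simp
    hence "u powr b < c powr b" using bp mx u_eq by (intro powr_less_mono2) (auto simp: u_def)
    hence "(real n - x) powr b / (m - x) powr b < real n / m" using upow cb by simp
    hence "m * (real n - x) powr b < real n * (m - x) powr b" using A m1 by (simp add: field_simps)
    hence "m / (m-x) powr b < real n / (real n - x) powr b" using A by (simp add: field_simps)
    thus ?thesis unfolding Qeq by simp
  qed
  show "xn H n < x \<Longrightarrow> (real n-1)*(real n-1-x) powr (H-1/2-1) - real n*(real n-x) powr (H-1/2-1) > 0"
  proof -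
    assume "xn H n < x"
    hence "m - x < 1/(c-1)" unfolding xn_eq by simp
    hence "(m-x)*(c-1) < 1" using c1 by (simp add: field_simps)
    hence "c - 1 < 1/(m-x)" using mx by (simp add: field_simps)
    hence "c < u" unfolding u_eq by simp
    hence "c powr b < u powr b" using bp c1 by (intro powr_less_mono2) auto
    hence "real n / m < (real n - x) powr b / (m - x) powr b" using upow cb by simp
    hence "real n * (m - x) powr b < m * (real n - x) powr b" using A m1 by (simp add: field_simps)
    hence "real n / (real n - x) powr b < m / (m-x) powr b" using A by (simp add: field_simps)
    thus ?thesis unfolding Qeq by simp
  qed
qed
lemma F_pos:
  fixes H x :: real and n :: nat
  assumes H: "1/2<H" and x: "0 < x" "x \<le> real n - 1"
  shows "x powr (1/2-H) * phiH H n x > 0"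
proof -
  have "(real n - 1 - x) powr (H-1/2) < (real n - x) powr (H-1/2)"
    using H x by (intro powr_less_mono2) auto
  thus ?thesis using x by (simp add: phiH_def)
qed

lemma F_nonneg:
  fixes H x :: real and n :: nat
  assumes H: "1/2<H" and x: "0 \<le> x" "x \<le> real n - 1"
  shows "x powr (1/2-H) * phiH H n x \<ge> 0"
  using F_pos[OF H _ x(2)] x(1) by (cases "x = 0") auto

lemma F_cont:
  fixes H :: real and n :: nat
  assumes H: "1/2<H"
  shows "continuous_on {0<..real n - 1} (\<lambda>x. x powr (1/2-H) * phiH H n x)"
  unfolding phiH_def
  using H by (intro continuous_on_mult continuous_on_diff continuous_on_powr' continuous_intros) auto

lemma F_int0:
  fixes H :: real and n :: nat
  assumes H: "1/2<H" "H<1" and n: "1<n"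
  shows "(\<lambda>x. x powr (1/2-H) * phiH H n x) integrable_on {0..real n - 1}"
proof -
  define K where "K = real n powr (H-1/2)"
  have g: "(\<lambda>x. K * x powr (1/2-H)) integrable_on {0<..real n - 1}"
    using integrable_on_cmult_left[OF integrable_on_powr_from_0'[of "1/2-H" "real n - 1"], of K] H n by auto
  have "(\<lambda>x. x powr (1/2-H) * phiH H n x) integrable_on {0<..real n - 1}"
  proof (rule measurable_bounded_by_integrable_imp_integrable_real[OF _ g])
    show "(\<lambda>x. x powr (1/2-H) * phiH H n x) \<in> borel_measurable (lebesgue_on {0<..real n - 1})"
      using F_cont[OF H(1)] by (rule continuous_imp_measurable_on_sets_lebesgue) simp
    show "{0<..real n - 1} \<in> sets lebesgue" by simp
    fix x assume x: "x \<in> {0<..real n - 1}"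
    have "phiH H n x \<le> (real n - x) powr (H-1/2)"
      unfolding phiH_def by simp
    also have "\<dots> \<le> K" unfolding K_def using x H by (intro powr_mono2) auto
    finally have "phiH H n x \<le> K" .
    moreover have "0 \<le> phiH H n x" using F_pos[OF H(1), of x n] x
      by (simp add: zero_less_mult_iff)
    ultimately show "\<bar>x powr (1/2-H) * phiH H n x\<bar> \<le> K * x powr (1/2-H)"
      using x by (simp add: abs_mult mult_right_mono mult.commute)
  qed
  then show ?thesis
    by (rule integrable_spike_set) (auto intro: negligible_subset[of "{0}"])
qed

lemma F_int:
  fixes H c d :: real and n :: nat
  assumes H: "1/2<H" "H<1" and n: "1<n" and "0 \<le> c" "d \<le> real n - 1"
  shows "(\<lambda>x. x powr (1/2-H) * phiH H n x) integrable_on {c..d}"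
  using integrable_on_subinterval[OF F_int0[OF H n], of c d] assms by auto
lemma xn_bounds:
  fixes H :: real and n :: nat
  assumes H: "1/2<H" "H<1" and n: "1<n"
  shows "0 \<le> xn H n" "xn H n < real n - 1"
proof -
  define m where "m = real n - 1"
  define p where "p = 2/(3-2*H)"
  define c where "c = (1 + 1/m) powr p"
  have m1: "m \<ge> 1" using n by (simp add: m_def)
  have p1: "p \<ge> 1" using H by (simp add: p_def field_simps)
  have b1: "1 + 1/m > 1" using m1 by simp
  have "(1 + 1/m) powr 1 \<le> c" unfolding c_def using p1 b1 by (intro powr_mono) auto
  hence cge: "c \<ge> 1 + 1/m" using b1 by simp
  have xn_eq: "xn H n = m - 1/(c-1)" by (simp add: xn_def m_def c_def p_def)
  have c0: "c - 1 > 0" using cge m1 by (smt (verit) divide_pos_pos)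
  have "1/(c-1) \<le> 1/(1/m)" using cge m1 c0 by (intro divide_left_mono) auto
  thus "0 \<le> xn H n" unfolding xn_eq by simp
  show "xn H n < real n - 1" using c0 unfolding xn_eq m_def by simp
qed

lemma F_dec:
  fixes H s t :: real and n :: nat
  assumes H: "1/2<H" "H<1" and n: "1<n" and st: "0 < s" "s < t" "t \<le> xn H n"
  shows "t powr (1/2-H) * phiH H n t < s powr (1/2-H) * phiH H n s"
proof (rule DERIV_neg_imp_decreasing_open[OF st(2)])
  have xm: "xn H n < real n - 1" using xn_bounds[OF H n] by simp
  fix y assume y: "s < y" "y < t"
  have y0: "0 < y" "y < real n - 1" "0 \<le> y" "y < xn H n" using y st xm by auto
  have "(H-1/2) * y powr (1/2-H-1) * ((real n-1)*(real n-1-y) powr (H-1/2-1) - real n*(real n-y) powr (H-1/2-1)) < 0"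
    using Q_sign(1)[OF H n y0(3) y0(2) y0(4)] H y0(1) by (simp add: mult_pos_neg)
  with F_deriv[OF y0(1) y0(2), of H]
  show "\<exists>D. ((\<lambda>x. x powr (1/2-H) * phiH H n x) has_real_derivative D) (at y) \<and> D < 0" by blast
next
  have xm: "xn H n < real n - 1" using xn_bounds[OF H n] by simp
  show "continuous_on {s..t} (\<lambda>x. x powr (1/2-H) * phiH H n x)"
    by (rule continuous_on_subset[OF F_cont[OF H(1)]]) (use st xm in auto)
qed

lemma F_inc:
  fixes H s t :: real and n :: nat
  assumes H: "1/2<H" "H<1" and n: "1<n" and st: "0 < s" "xn H n \<le> s" "s < t" "t \<le> real n - 1"
  shows "s powr (1/2-H) * phiH H n s < t powr (1/2-H) * phiH H n t"
proof (rule DERIV_pos_imp_increasing_open[OF st(3)])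
  fix y assume y: "s < y" "y < t"
  have y0: "0 < y" "y < real n - 1" "0 \<le> y" "xn H n < y" using y st by auto
  have "(H-1/2) * y powr (1/2-H-1) * ((real n-1)*(real n-1-y) powr (H-1/2-1) - real n*(real n-y) powr (H-1/2-1)) > 0"
    using Q_sign(2)[OF H n y0(3) y0(2) y0(4)] H y0(1) by simp
  with F_deriv[OF y0(1) y0(2), of H]
  show "\<exists>D. ((\<lambda>x. x powr (1/2-H) * phiH H n x) has_real_derivative D) (at y) \<and> D > 0" by blast
next
  show "continuous_on {s..t} (\<lambda>x. x powr (1/2-H) * phiH H n x)"
    by (rule continuous_on_subset[OF F_cont[OF H(1)]]) (use st in auto)
qed
lemma int_pos_gen:
  fixes g :: "real \<Rightarrow> real"
  assumes "c < d" "continuous_on {c..d} g" "\<And>x. x \<in> {c..d} \<Longrightarrow> 0 \<le> g x" "p \<in> {c..d}" "g p > 0"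
  shows "integral {c..d} g > 0"
proof -
  have gi: "g integrable_on {c..d}" using assms(2) by (rule integrable_continuous_interval)
  have ge: "integral {c..d} g \<ge> 0" using assms(3) by (intro integral_nonneg gi) auto
  show ?thesis
  proof (rule ccontr)
    assume "\<not> ?thesis"
    with ge have "integral {c..d} g = 0" by simp
    moreover have "(g has_integral integral {c..d} g) {c..d}" using gi by (rule integrable_integral)
    ultimately have "(g has_integral 0) (cbox c d)" by simp
    hence "g p = 0"
      using assms by (intro has_integral_0_cbox_imp_0[of c d g]) auto
    with assms(5) show False by simp
  qed
qed

lemma int_upper_strict:
  fixes g :: "real \<Rightarrow> real"
  assumes "c < d" "continuous_on {c..d} g" "\<And>x. x \<in> {c..d} \<Longrightarrow> g x \<le> k" "p \<in> {c..d}" "g p < k"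
  shows "integral {c..d} g < k * (d - c)"
proof -
  have gi: "g integrable_on {c..d}" using assms(2) by (rule integrable_continuous_interval)
  have "integral {c..d} (\<lambda>x. k - g x) > 0"
    using assms by (intro int_pos_gen[of c d _ p]) (auto intro!: continuous_intros)
  moreover have "integral {c..d} (\<lambda>x. k - g x) = k * (d - c) - integral {c..d} g"
  proof -
    have "integral {c..d} (\<lambda>x. k - g x) = integral {c..d} (\<lambda>x. k) - integral {c..d} g"
      by (rule integral_diff) (auto simp: gi)
    thus ?thesis using assms(1) by (simp add: mult.commute)
  qed
  ultimately show ?thesis by simp
qed

lemma int_lower:
  fixes g :: "real \<Rightarrow> real"
  assumes "c \<le> d" "g integrable_on {c..d}" "\<And>x. x \<in> {c<..d} \<Longrightarrow> k \<le> g x"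
  shows "k * (d - c) \<le> integral {c..d} g"
proof -
  define G where "G x = (if x = c then k else g x)" for x
  have e: "integral {c..d} g = integral {c..d} G"
    by (rule integral_spike[of "{c}"]) (auto simp: G_def)
  have Gi: "G integrable_on {c..d}"
    by (rule integrable_spike[OF assms(2), of "{c}"]) (auto simp: G_def)
  have "integral {c..d} (\<lambda>x. k) \<le> integral {c..d} G"
    using assms by (intro integral_le Gi) (auto simp: G_def)
  thus ?thesis using e assms(1) by (simp add: mult.commute)
qed
theorem corollaryA2:
  fixes H :: real and n :: nat
  assumes "1/2 < H" and "H < 1" and "1 < n"
  shows "(\<forall>i\<in>{1..n-1}. 0 < In H n i)
    \<and> (\<forall>i j. 1 \<le> i \<and> i < j \<and> int j \<le> i_n H n - 1 \<longrightarrow> In H n j < In H n i)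
    \<and> (\<forall>i j. i_n H n + 1 \<le> int i \<and> i < j \<and> j \<le> n - 1 \<longrightarrow> In H n i < In H n j)"
proof -
  note H = assms(1,2) and n = assms(3)
  define F where "F x = x powr (1/2-H) * phiH H n x" for x
  have InF: "In H n i = integral {real i - 1..real i} F" for i by (simp add: In_def F_def[abs_def])
  have Fcont: "continuous_on {0<..real n - 1} F" using F_cont[OF H(1)] by (simp add: F_def[abs_def])
  have Fint: "\<And>c d. 0 \<le> c \<Longrightarrow> d \<le> real n - 1 \<Longrightarrow> F integrable_on {c..d}"
    using F_int[OF H n] by (simp add: F_def[abs_def])
  have Fpos: "\<And>x. 0 < x \<Longrightarrow> x \<le> real n - 1 \<Longrightarrow> F x > 0" using F_pos[OF H(1)] by (simp add: F_def)
  have Fnn: "\<And>x. 0 \<le> x \<Longrightarrow> x \<le> real n - 1 \<Longrightarrow> F x \<ge> 0" using F_nonneg[OF H(1)] by (simp add: F_def)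
  have Fdec: "\<And>s t. 0 < s \<Longrightarrow> s \<le> t \<Longrightarrow> t \<le> xn H n \<Longrightarrow> F t \<le> F s"
    using F_dec[OF H n] by (force simp: F_def order.order_iff_strict)
  have Fdec': "\<And>s t. 0 < s \<Longrightarrow> s < t \<Longrightarrow> t \<le> xn H n \<Longrightarrow> F t < F s"
    using F_dec[OF H n] by (simp add: F_def)
  have Finc: "\<And>s t. 0 < s \<Longrightarrow> xn H n \<le> s \<Longrightarrow> s \<le> t \<Longrightarrow> t \<le> real n - 1 \<Longrightarrow> F s \<le> F t"
    using F_inc[OF H n] by (force simp: F_def order.order_iff_strict)
  have Finc': "\<And>s t. 0 < s \<Longrightarrow> xn H n \<le> s \<Longrightarrow> s < t \<Longrightarrow> t \<le> real n - 1 \<Longrightarrow> F s < F t"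
    using F_inc[OF H n] by (simp add: F_def)
  have xb: "0 \<le> xn H n" "xn H n < real n - 1" using xn_bounds[OF H n] by auto
  have nm: "\<And>i. i \<le> n - 1 \<Longrightarrow> real i \<le> real n - 1" using n by auto
  have P1: "\<forall>i\<in>{1..n-1}. 0 < In H n i"
  proof
    fix i assume i: "i \<in> {1..n-1}"
    have i1: "real i \<ge> 1" "real i \<le> real n - 1" using i nm by auto
    have "integral {real i - 1/2..real i} F \<le> integral {real i - 1..real i} F"
      using i1 by (intro integral_subset_le Fint) (auto intro!: Fnn)
    moreover have "integral {real i - 1/2..real i} F > 0"
      using i1 by (intro int_pos_gen[of _ _ _ "real i"] continuous_on_subset[OF Fcont] Fnn Fpos) auto
    ultimately show "0 < In H n i" unfolding InF by simp
  qed
  have P2: "\<forall>i j. 1 \<le> i \<and> i < j \<and> int j \<le> i_n H n - 1 \<longrightarrow> In H n j < In H n i"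
  proof (intro allI impI, elim conjE)
    fix i j :: nat assume ij: "1 \<le> i" "i < j" "int j \<le> i_n H n - 1"
    have jx: "real j \<le> xn H n" using ij(3) unfolding i_n_def by (simp add: le_floor_iff)
    have r: "real i \<ge> 1" "real i \<le> real j - 1" using ij by auto
    have a: "integral {real j - 1..real j} F < F (real j - 1) * (real j - (real j - 1))"
      using r jx xb
      by (intro int_upper_strict[of _ _ _ _ "real j"] continuous_on_subset[OF Fcont] Fdec Fdec') auto
    have b: "F (real j - 1) \<le> F (real i)" using r jx by (intro Fdec) auto
    have c: "F (real i) * (real i - (real i - 1)) \<le> integral {real i - 1..real i} F"
      using r jx xb by (intro int_lower Fint Fdec) auto
    show "In H n j < In H n i" unfolding InF using a b c by simp
  qed
  have P3: "\<forall>i j. i_n H n + 1 \<le> int i \<and> i < j \<and> j \<le> n - 1 \<longrightarrow> In H n i < In H n j"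
  proof (intro allI impI, elim conjE)
    fix i j :: nat assume ij: "i_n H n + 1 \<le> int i" "i < j" "j \<le> n - 1"
    have fl: "xn H n < real_of_int \<lfloor>xn H n\<rfloor> + 1" using floor_correct[of "xn H n"] by linarith
    have f0: "0 \<le> \<lfloor>xn H n\<rfloor>" using xb by simp
    have ix: "xn H n < real i - 1" "real i \<ge> 2"
      using ij(1) fl f0 unfolding i_n_def by linarith+
    have r: "real i \<le> real j - 1" "real j \<le> real n - 1" using ij nm by auto
    have a: "integral {real i - 1..real i} F < F (real i) * (real i - (real i - 1))"
      using r ix xb
      by (intro int_upper_strict[of _ _ _ _ "real i - 1"] continuous_on_subset[OF Fcont] Finc Finc') auto
    have b: "F (real i) \<le> F (real j - 1)" using r ix by (intro Finc) auto
    have c: "F (real j - 1) * (real j - (real j - 1)) \<le> integral {real j - 1..real j} F"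
      using r ix xb by (intro int_lower Fint Finc) auto
    show "In H n i < In H n j" unfolding InF using a b c by simp
  qed
  show ?thesis using P1 P2 P3 by blast
qed

end
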